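(* For every integer $N\ge1$, $$\phi_N(y,z)=\{(q-1)z\}^{-N(N+1)/2}q^{-(N-1)N(N+1)/6}\det\Big(p_{2(N+1-i)}\big(y,q^{N+1-j}z\big)\Big)_{i,j=1}^{N+1},$$ i.e. the $(N+1)\times(N+1)$ determinant has first row $p_{2N}(y,q^Nz),p_{2N}(y,q^{N-1}z),\dots,p_{2N}(y,z)$ and last row $p_0(y,q^Nz),\dots,p_0(y,z)$.
   Context: $q$ is a fixed nonzero complex constant that is not a root of unity; $y,z$ are variables. For $k\in\mathbb{Z}$ the polynomials $p_k(y,z)$ are defined by the generating function $\sum_{n\ge 0}p_n(y,z)t^n=\frac{(-(1-q)t;q)_\infty}{((1-q)yt;q)_\infty((1-q)zt;q)_\infty}$, with $(a;q)_\infty=\prod_{i\ge0}(1-aq^i)$, and $p_k=0$ for $k<0$; equivalently $p_n(y,z)=(1-q)^n\sum_{a+b+c=n}\frac{y^a z^b q^{c(c-1)/2}}{(q;q)_a(q;q)_b(q;q)_c}$ with $(q;q)_m=\prod_{j=1}^m(1-q^j)$. For $N>0$, $\phi_N(y,z)=\det\big(p_{N-2i+j+1}(y,z)\big)_{i,j=1}^N$. *)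

theory Defs
  imports Complex_Main "Jordan_Normal_Form.Determinant"
begin

definition qpoch :: "complex \<Rightarrow> nat \<Rightarrow> complex" where
  "qpoch q m = (\<Prod>j=1..m. 1 - q ^ j)"

definition pp :: "complex \<Rightarrow> int \<Rightarrow> complex \<Rightarrow> complex \<Rightarrow> complex" where
  "pp q k y z = (if k < 0 then 0 else
     (let n = nat k in
      (1 - q) ^ n * (\<Sum>(a, b, c) \<in> {(a, b, c). a + b + c = n}.
          y ^ a * z ^ b * q ^ (c * (c - 1) div 2) / (qpoch q a * qpoch q b * qpoch q c))))"

text \<open>phi_N(y,z) = det (p_{N-2i+j+1}(y,z))_{i,j=1..N}; 0-based indices i' = i-1, j' = j-1.\<close>
definition phi :: "complex \<Rightarrow> nat \<Rightarrow> complex \<Rightarrow> complex \<Rightarrow> complex" where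
  "phi q N y z = det (mat N N (\<lambda>(i, j). pp q (int N - 2 * int i + int j) y z))"

end

theory Submission imports Defs begin

definition TT :: "complex \<Rightarrow> complex \<Rightarrow> nat \<Rightarrow> complex" where
  "TT q y m = (\<Sum>a\<le>m. y ^ a * q ^ ((m - a) * (m - a - 1) div 2) / (qpoch q a * qpoch q (m - a)))"

lemma pp_nat: "pp q (int n) y z = (1 - q) ^ n * (\<Sum>b\<le>n. z ^ b / qpoch q b * TT q y (n - b))"
proof -
  let ?f = "\<lambda>(a, b, c). y ^ a * z ^ b * q ^ (c * (c - 1) div 2) / (qpoch q a * qpoch q b * qpoch q c)"
  have "(\<Sum>(a, b, c) \<in> {(a, b, c). a + b + c = n}. ?f (a,b,c)) =
        (\<Sum>(b, a) \<in> (SIGMA b:{..n}. {..n - b}). ?f (a, b, n - b - a))"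
    by (rule sum.reindex_bij_witness[where i = "\<lambda>(b, a). (a, b, n - b - a)" and j = "\<lambda>(a, b, c). (b, a)"]) auto
  also have "\<dots> = (\<Sum>b\<le>n. \<Sum>a\<le>n - b. ?f (a, b, n - b - a))"
    by (subst sum.Sigma) auto
  also have "\<dots> = (\<Sum>b\<le>n. z ^ b / qpoch q b * TT q y (n - b))"
    unfolding TT_def sum_distrib_left
    by (intro sum.cong refl) (simp add: field_simps diff_diff_add)
  finally show ?thesis unfolding pp_def by (simp add: Let_def)
qed

lemma qpoch_Suc: "qpoch q (Suc n) = qpoch q n * (1 - q ^ Suc n)"
  unfolding qpoch_def by simp

lemma pp_rec_nat:
  assumes nz: "\<And>m. qpoch q m \<noteq> 0"
  shows "pp q (int (Suc n)) y (q * w) = pp q (int (Suc n)) y w - (1 - q) * w * pp q (int n) y w"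
proof -
  have d: "(q*w) ^ b / qpoch q b - w ^ b / qpoch q b = (if b = 0 then 0 else - w * (w ^ (b - 1) / qpoch q (b - 1)))" for b
  proof (cases b)
    case 0 then show ?thesis by simp
  next
    case (Suc k)
    have "1 - q ^ Suc k \<noteq> 0" using nz[of "Suc k"] unfolding qpoch_Suc by auto
    have e: "(q*w) ^ b / qpoch q b - w ^ b / qpoch q b = w ^ Suc k * (q ^ Suc k - 1) / (qpoch q k * (1 - q ^ Suc k))"
      unfolding Suc qpoch_Suc power_mult_distrib by (simp add: diff_divide_distrib[symmetric] right_diff_distrib)
    have f: "w ^ Suc k * (q ^ Suc k - 1) = - (w ^ Suc k * (1 - q ^ Suc k))" by (simp add: algebra_simps)
    show ?thesis unfolding e f using `1 - q ^ Suc k \<noteq> 0` Suc by simp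
  qed
  have "pp q (int (Suc n)) y (q * w) - pp q (int (Suc n)) y w =
     (1 - q) ^ Suc n * (\<Sum>b\<le>Suc n. ((q*w) ^ b / qpoch q b - w ^ b / qpoch q b) * TT q y (Suc n - b))"
    unfolding pp_nat right_diff_distrib[symmetric] sum_subtractf[symmetric] left_diff_distrib ..
  also have "\<dots> = (1 - q) ^ Suc n * (\<Sum>b\<le>Suc n. (if b = 0 then 0 else - w * (w ^ (b - 1) / qpoch q (b - 1))) * TT q y (Suc n - b))"
    unfolding d ..
  also have "\<dots> = (1 - q) ^ Suc n * (\<Sum>b\<le>n. (- w * (w ^ b / qpoch q b)) * TT q y (n - b))"
    by (subst sum.atMost_Suc_shift) simp
  also have "\<dots> = (1 - q) ^ Suc n * (- w * (\<Sum>b\<le>n. (w ^ b / qpoch q b) * TT q y (n - b)))"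
    by (simp add: sum_distrib_left mult.assoc)
  also have "\<dots> = - (1 - q) * w * pp q (int n) y w"
    unfolding pp_nat power_Suc by (simp only: mult_minus_left mult_minus_right mult_ac)
  finally have "pp q (int (Suc n)) y (q * w) - pp q (int (Suc n)) y w = - (1 - q) * w * pp q (int n) y w" .
  then show ?thesis by (metis add.commute diff_eq_eq uminus_add_conv_diff mult_minus_left)
qed

lemma pp_rec:
  assumes nz: "\<And>m. qpoch q m \<noteq> 0"
  shows "pp q k y (q * w) = pp q k y w - (1 - q) * w * pp q (k - 1) y w"
proof (cases "k \<ge> 1")
  case True
  then obtain n where "k = int (Suc n)" by (intro that[of "nat (k - 1)"]) simp
  then show ?thesis using pp_rec_nat[OF nz] by simp
next
  case False
  then show ?thesis unfolding pp_def by (auto simp: Let_def)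
qed


fun ee :: "complex \<Rightarrow> complex \<Rightarrow> nat \<Rightarrow> nat \<Rightarrow> complex" where
  "ee q z 0 m = (if m = 0 then 1 else 0)"
| "ee q z (Suc k) m = ee q z k m - (1 - q) * q ^ k * z * (if m = 0 then 0 else ee q z k (m - 1))"

lemma ee_zero: "k < m \<Longrightarrow> ee q z k m = 0"
  by (induction k arbitrary: m) auto

lemma tri_arith: "Suc k * k div 2 = k * (k - 1) div 2 + k"
proof (cases k)
  case (Suc j)
  have "Suc k * k = (k * (k - 1)) + 2 * k" using Suc by simp
  then show ?thesis by simp
qed simp

lemma ee_diag: "ee q z k k = ((q - 1) * z) ^ k * q ^ (k * (k - 1) div 2)"
proof (induction k)
  case (Suc k)
  have "ee q z (Suc k) (Suc k) = (q - 1) * q ^ k * z * ee q z k k"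
    using ee_zero[of k "Suc k" q z] by (simp add: algebra_simps)
  also have "\<dots> = ((q - 1) * z) ^ Suc k * q ^ (Suc k * k div 2)"
    unfolding Suc tri_arith by (simp add: power_add algebra_simps)
  finally show ?case by simp
qed simp

lemma pp_expand:
  assumes nz: "\<And>m. qpoch q m \<noteq> 0"
  shows "pp q n y (q ^ k * z) = (\<Sum>m\<le>k. ee q z k m * pp q (n - int m) y z)"
proof (induction k arbitrary: n)
  case 0
  then show ?case by simp
next
  case (Suc k)
  let ?c = "(1 - q) * q ^ k * z"
  have "pp q n y (q ^ Suc k * z) = pp q n y (q * (q ^ k * z))" by (simp add: mult.assoc)
  also have "\<dots> = pp q n y (q ^ k * z) - ?c * pp q (n - 1) y (q ^ k * z)"
    using pp_rec[OF nz] by (simp add: mult.assoc)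
  also have "\<dots> = (\<Sum>m\<le>k. ee q z k m * pp q (n - int m) y z) - ?c * (\<Sum>m\<le>k. ee q z k m * pp q (n - 1 - int m) y z)"
    using Suc by simp
  also have "\<dots> = (\<Sum>m\<le>Suc k. ee q z (Suc k) m * pp q (n - int m) y z)"
  proof -
    have s1: "(\<Sum>m\<le>Suc k. ee q z k m * pp q (n - int m) y z) = (\<Sum>m\<le>k. ee q z k m * pp q (n - int m) y z)"
      using ee_zero[of k "Suc k" q z] by simp
    have s2: "(\<Sum>m\<le>Suc k. (if m = 0 then 0 else ee q z k (m - 1)) * pp q (n - int m) y z)
       = (\<Sum>m\<le>k. ee q z k m * pp q (n - 1 - int m) y z)"
      by (subst sum.atMost_Suc_shift) (simp add: algebra_simps)
    have "(\<Sum>m\<le>Suc k. ee q z (Suc k) m * pp q (n - int m) y z)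
       = (\<Sum>m\<le>Suc k. ee q z k m * pp q (n - int m) y z)
         - ?c * (\<Sum>m\<le>Suc k. (if m = 0 then 0 else ee q z k (m - 1)) * pp q (n - int m) y z)"
      by (simp only: ee.simps left_diff_distrib sum_subtractf sum_distrib_left mult.assoc)
    then show ?thesis unfolding s1 s2 by simp
  qed
  finally show ?case .
qed

lemma pp_expand2:
  assumes nz: "\<And>m. qpoch q m \<noteq> 0" and "k \<le> K"
  shows "pp q n y (q ^ k * z) = (\<Sum>m\<le>K. ee q z k m * pp q (n - int m) y z)"
  unfolding pp_expand[OF nz]
  by (rule sum.mono_neutral_left) (use assms(2) ee_zero in auto)

lemma pp0: "pp q 0 y z = 1"
  using pp_nat[of q 0 y z] by (simp add: TT_def qpoch_def)

lemma pp_neg: "k < 0 \<Longrightarrow> pp q k y z = 0"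
  unfolding pp_def by simp


lemma tet_arith: "Suc N * N * (N + 2) div 6 = (N - 1) * N * (N + 1) div 6 + N * (N + 1) div 2"
proof -
  have ev: "N * (N + 1) = 2 * (N * (N + 1) div 2)" by simp
  have "Suc N * N * (N + 2) = (N - 1) * N * (N + 1) + 3 * (N * (N + 1))"
    by (cases N) (simp_all add: algebra_simps)
  also have "\<dots> = (N - 1) * N * (N + 1) + 6 * (N * (N + 1) div 2)"
  proof -
    obtain m where m: "N * (N + 1) = 2 * m" using ev by blast
    show ?thesis unfolding m by simp
  qed
  finally show ?thesis by simp
qed

lemma diag_prod: "(\<Prod>k\<le>N. ee q z k k) = ((q - 1) * z) ^ (N * (N + 1) div 2) * q ^ ((N - 1) * N * (N + 1) div 6)"
proof (induction N)
  case (Suc N)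
  have a: "Suc N * (Suc N + 1) div 2 = N * (N + 1) div 2 + Suc N"
    using tri_arith[of "Suc N"] by (simp add: algebra_simps)
  have b: "(Suc N - 1) * Suc N * (Suc N + 1) div 6 = (N - 1) * N * (N + 1) div 6 + N * (N + 1) div 2"
    using tet_arith[of N] by (simp add: algebra_simps)
  have c: "Suc N * (Suc N - 1) div 2 = N * (N + 1) div 2" by (simp add: algebra_simps)
  show ?case unfolding prod.atMost_Suc Suc.IH ee_diag[of q z "Suc N"] a b c by (simp add: power_add mult_ac)
qed simp

lemma qpoch_nz:
  assumes "\<forall>n::nat. n > 0 \<longrightarrow> q ^ n \<noteq> 1"
  shows "qpoch q m \<noteq> 0"
  unfolding qpoch_def using assms by (auto simp: prod_zero_iff)


theorem lemma5:
  fixes q y z :: complex and N :: nat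
  assumes "q \<noteq> 0" and "\<forall>n::nat. n > 0 \<longrightarrow> q ^ n \<noteq> 1"
    and "z \<noteq> 0" and "N \<ge> 1"
  shows "phi q N y z =
     inverse (((q - 1) * z) ^ (N * (N + 1) div 2)) * inverse (q ^ ((N - 1) * N * (N + 1) div 6)) *
     det (mat (N + 1) (N + 1) (\<lambda>(i, j). pp q (2 * (int N - int i)) y (q ^ (N - j) * z)))"
proof -
  have nz: "\<And>m. qpoch q m \<noteq> 0" using qpoch_nz[OF assms(2)] .
  have q1: "q - 1 \<noteq> 0" using assms(2)[rule_format, of 1] by simp
  define M where "M = mat (N + 1) (N + 1) (\<lambda>(i, j). pp q (2 * (int N - int i)) y (q ^ (N - j) * z))"
  define B where "B = mat (N + 1) (N + 1) (\<lambda>(i, m). pp q (int N - 2 * int i + int m) y z)"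
  define E where "E = mat (N + 1) (N + 1) (\<lambda>(m, j). ee q z (N - j) (N - m))"
  have B: "B \<in> carrier_mat (N + 1) (N + 1)" and E: "E \<in> carrier_mat (N + 1) (N + 1)"
    unfolding B_def E_def by auto
  have ME: "M = B * E"
  proof (rule eq_matI)
    fix i j assume i: "i < dim_row (B * E)" and j: "j < dim_col (B * E)"
    then have i: "i \<le> N" and j: "j \<le> N" using B E by auto
    have "(B * E) $$ (i, j) = (\<Sum>m\<in>{0..<N + 1}. pp q (int N - 2 * int i + int m) y z * ee q z (N - j) (N - m))"
      using i j B E unfolding B_def E_def by (simp add: scalar_prod_def)
    also have "\<dots> = (\<Sum>m\<le>N. ee q z (N - j) m * pp q (2 * (int N - int i) - int m) y z)"
      by (rule sum.reindex_bij_witness[where i = "\<lambda>m. N - m" and j = "\<lambda>m. N - m"]) (auto simp: of_nat_diff algebra_simps)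
    also have "\<dots> = M $$ (i, j)"
      unfolding M_def using i j by (simp add: pp_expand2[OF nz, of "N - j" N])
    finally show "M $$ (i, j) = (B * E) $$ (i, j)" ..
  qed (use B E in \<open>auto simp: M_def\<close>)
  have detE: "det E = ((q - 1) * z) ^ (N * (N + 1) div 2) * q ^ ((N - 1) * N * (N + 1) div 6)"
  proof -
    have "det E = prod_list (diag_mat E)"
      by (rule det_lower_triangular[OF _ E]) (auto simp: E_def intro!: ee_zero)
    also have "\<dots> = (\<Prod>j = 0..<N + 1. ee q z (N - j) (N - j))"
      unfolding prod_list_diag_prod using E by (simp add: E_def)
    also have "\<dots> = (\<Prod>k\<le>N. ee q z k k)"
      by (rule prod.reindex_bij_witness[where i = "\<lambda>m. N - m" and j = "\<lambda>m. N - m"]) auto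
    finally show ?thesis unfolding diag_prod .
  qed
  have detB: "det B = phi q N y z"
  proof -
    have "det B = (\<Sum>j<N + 1. B $$ (N, j) * cofactor B N j)"
      by (rule laplace_expansion_row[OF B]) simp
    also have "\<dots> = B $$ (N, N) * cofactor B N N"
      by (simp add: B_def pp_neg)
    also have "\<dots> = det (mat_delete B N N)"
      by (simp add: B_def pp0 cofactor_def)
    also have "mat_delete B N N = mat N N (\<lambda>(i, j). pp q (int N - 2 * int i + int j) y z)"
      by (rule eq_matI) (auto simp: mat_delete_def B_def)
    finally show ?thesis unfolding phi_def .
  qed
  have "det M = phi q N y z * (((q - 1) * z) ^ (N * (N + 1) div 2) * q ^ ((N - 1) * N * (N + 1) div 6))"
    unfolding ME det_mult[OF B E] detB detE ..
  then show ?thesis unfolding M_def[symmetric] using q1 assms(1,3) by (simp add: field_simps)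
qed

end
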